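(* Let $W$ be a finite Weyl group having a central involution $\tilde w$, and let $\tilde W=W\ltimes Z$ be the corresponding affine Weyl group. Suppose $x$ is an involution in $\tilde W$ of the form $x=(\tilde w,\mathbf u)$ for some $\mathbf u\in Z$, and let $X=x^{\tilde W}$ be the conjugacy class of $x$ in $\tilde W$. Then $\mathcal{C}(\tilde W,X)$ is disconnected.
   Context: $W$ is a finite Weyl group with root system $\Phi$ in a Euclidean space $V$, $\alpha^\vee=2\alpha/\langle\alpha,\alpha\rangle$, and $Z$ is the coroot lattice $L(\Phi^\vee)$ viewed as a group of translations. The affine Weyl group $\tilde W$ consists of pairs $(a,\mathbf u)$, $a\in W$, $\mathbf u\in Z$, with multiplication $(a,\mathbf u)(b,\mathbf v)=(ab,\mathbf u^b+\mathbf v)$, where $\mathbf u\mapsto\mathbf u^b$ is the (right) linear action of $W$ on $V$. $\mathcal{C}(G,X)$ is the graph on a set $X$ of involutions of $G$ with $x,y$ adjacent iff they commute. *)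

theory Defs
  imports "HOL-Analysis.Analysis"
begin

definition coroot :: "'a::euclidean_space \<Rightarrow> 'a" where
  "coroot \<alpha> = (2 / (\<alpha> \<bullet> \<alpha>)) *\<^sub>R \<alpha>"

definition refl :: "'a::euclidean_space \<Rightarrow> 'a \<Rightarrow> 'a" where
  "refl \<alpha> v = v - (v \<bullet> coroot \<alpha>) *\<^sub>R \<alpha>"

definition root_system :: "'a::euclidean_space set \<Rightarrow> bool" where
  "root_system \<Phi> \<longleftrightarrow> finite \<Phi> \<and> 0 \<notin> \<Phi> \<and> span \<Phi> = UNIV
     \<and> (\<forall>\<alpha>\<in>\<Phi>. \<forall>c::real. c *\<^sub>R \<alpha> \<in> \<Phi> \<longrightarrow> c = 1 \<or> c = -1)
     \<and> (\<forall>\<alpha>\<in>\<Phi>. refl \<alpha> ` \<Phi> \<subseteq> \<Phi>)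
     \<and> (\<forall>\<alpha>\<in>\<Phi>. \<forall>\<beta>\<in>\<Phi>. \<beta> \<bullet> coroot \<alpha> \<in> \<int>)"

inductive_set weyl_group :: "'a::euclidean_space set \<Rightarrow> ('a \<Rightarrow> 'a) set" for \<Phi> where
  id: "id \<in> weyl_group \<Phi>"
| step: "w \<in> weyl_group \<Phi> \<Longrightarrow> \<alpha> \<in> \<Phi> \<Longrightarrow> refl \<alpha> \<circ> w \<in> weyl_group \<Phi>"

definition coroot_lattice :: "'a::euclidean_space set \<Rightarrow> 'a set" where
  "coroot_lattice \<Phi> = {\<Sum>\<alpha>\<in>\<Phi>. of_int (c \<alpha>) *\<^sub>R coroot \<alpha> | c. True}"

text \<open>Affine Weyl group W x Z. The product ab in W is "first a, then b" (so that
  u^(ab) = (u^a)^b for the right action u^b = b u), i.e. ab = b o a, and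
  (a,u)(b,v) = (ab, u^b + v).\<close>
definition affine_weyl_group :: "'a::euclidean_space set \<Rightarrow> (('a \<Rightarrow> 'a) \<times> 'a) set" where
  "affine_weyl_group \<Phi> = weyl_group \<Phi> \<times> coroot_lattice \<Phi>"

definition aff_mult :: "(('a \<Rightarrow> 'a) \<times> 'a) \<Rightarrow> (('a \<Rightarrow> 'a) \<times> 'a) \<Rightarrow> (('a \<Rightarrow> 'a) \<times> 'a::real_vector)" where
  "aff_mult x y = (case x of (a, u) \<Rightarrow> case y of (b, v) \<Rightarrow> (b \<circ> a, b u + v))"

definition aff_one :: "('a \<Rightarrow> 'a) \<times> 'a::real_vector" where
  "aff_one = (id, 0)"

definition aff_inv :: "(('a \<Rightarrow> 'a) \<times> 'a) \<Rightarrow> (('a \<Rightarrow> 'a) \<times> 'a::real_vector)" where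
  "aff_inv x = (case x of (a, u) \<Rightarrow> (inv a, - (inv a u)))"

definition aff_conj_class :: "'a::euclidean_space set \<Rightarrow> (('a \<Rightarrow> 'a) \<times> 'a) \<Rightarrow> (('a \<Rightarrow> 'a) \<times> 'a) set" where
  "aff_conj_class \<Phi> x = {aff_mult (aff_mult (aff_inv g) x) g | g. g \<in> affine_weyl_group \<Phi>}"

definition comm_adj :: "('g \<Rightarrow> 'g \<Rightarrow> 'g) \<Rightarrow> 'g set \<Rightarrow> 'g \<Rightarrow> 'g \<Rightarrow> bool" where
  "comm_adj mul X x y \<longleftrightarrow> x \<in> X \<and> y \<in> X \<and> x \<noteq> y \<and> mul x y = mul y x"

definition comm_graph_connected :: "('g \<Rightarrow> 'g \<Rightarrow> 'g) \<Rightarrow> 'g set \<Rightarrow> bool" where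
  "comm_graph_connected mul X \<longleftrightarrow> (\<forall>x\<in>X. \<forall>y\<in>X. (comm_adj mul X)\<^sup>*\<^sup>* x y)"

end

theory Submission
  imports Defs
begin

lemma weyl_linear: "w \<in> weyl_group \<Phi> \<Longrightarrow> linear w"
proof (induction rule: weyl_group.induct)
  case id
  then show ?case using linear_id by (simp add: id_def)
next
  case (step w \<alpha>)
  have "linear (refl \<alpha>)"
    unfolding refl_def
    by (rule linearI) (simp_all add: inner_add_left scaleR_add_left algebra_simps)
  then show ?case using step linear_compose by blast
qed

lemma coroot_in_lattice:
  assumes "finite \<Phi>" "\<alpha> \<in> \<Phi>"
  shows "coroot \<alpha> \<in> coroot_lattice \<Phi>"
proof -
  have "(\<Sum>\<beta>\<in>\<Phi>. of_int (if \<beta> = \<alpha> then 1 else 0) *\<^sub>R coroot \<beta>) = (\<Sum>\<beta>\<in>\<Phi>. if \<beta> = \<alpha> then coroot \<beta> else 0)"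
    by (rule sum.cong) auto
  also have "\<dots> = coroot \<alpha>" using assms by (simp add: sum.delta')
  finally show ?thesis unfolding coroot_lattice_def
    by (intro CollectI exI[of _ "\<lambda>\<beta>. if \<beta> = \<alpha> then 1 else 0"]) simp
qed

lemma zero_in_lattice: "0 \<in> coroot_lattice \<Phi>"
proof -
  show ?thesis unfolding coroot_lattice_def
    by (intro CollectI exI[of _ "\<lambda>_. 0"]) simp
qed

theorem lemma2p6:
  fixes \<Phi> :: "'a::euclidean_space set"
    and w0 :: "'a \<Rightarrow> 'a" and u :: 'a
  assumes "root_system \<Phi>"
    and "w0 \<in> weyl_group \<Phi>" and "w0 \<noteq> id" and "w0 \<circ> w0 = id"
    and "\<forall>w\<in>weyl_group \<Phi>. w \<circ> w0 = w0 \<circ> w"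
    and "u \<in> coroot_lattice \<Phi>"
    and "aff_mult (w0, u) (w0, u) = aff_one" and "(w0, u) \<noteq> aff_one"
  shows "\<not> comm_graph_connected aff_mult (aff_conj_class \<Phi> (w0, u))"
proof
  assume conn: "comm_graph_connected aff_mult (aff_conj_class \<Phi> (w0, u))"
  let ?X = "aff_conj_class \<Phi> (w0, u)"
  have lw: "linear w0" using assms(2) weyl_linear by blast
  have ww: "w0 (w0 y) = y" for y using assms(4) by (metis comp_apply id_apply)
  have wu: "w0 u = - u" using assms(7) unfolding aff_mult_def aff_one_def
    by (simp add: eq_neg_iff_add_eq_0)
  have fin: "finite \<Phi>" and sp: "span \<Phi> = UNIV"
    using assms(1) unfolding root_system_def by auto
  have nz: "0 \<notin> \<Phi>" using assms(1) unfolding root_system_def by auto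
  have conjform: "\<exists>p. z = (w0, p) \<and> w0 p = - p" if zX: "z \<in> ?X" for z
  proof -
    obtain gg where gg: "z = aff_mult (aff_mult (aff_inv gg) (w0, u)) gg"
      "gg \<in> affine_weyl_group \<Phi>"
      using zX unfolding aff_conj_class_def by blast
    obtain b v where "gg = (b, v)" by (cases gg)
    then have g: "z = aff_mult (aff_mult (aff_inv (b, v)) (w0, u)) (b, v)"
      "b \<in> weyl_group \<Phi>"
      using gg unfolding affine_weyl_group_def by auto
    have lb: "linear b" using g(2) weyl_linear by blast
    have bw: "b (w0 y) = w0 (b y)" for y using assms(5) g(2) by (metis comp_apply)
    have bi: "b (inv b y) = y" for y
    proof -
      have "w \<in> weyl_group \<Phi> \<Longrightarrow> bij w" for w
      proof (induction rule: weyl_group.induct)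
        case id then show ?case using bij_id by (simp add: id_def)
      next
        case (step w \<alpha>)
        have "refl \<alpha> (refl \<alpha> y) = y" if "\<alpha> \<in> \<Phi>" for y
        proof -
          have "\<alpha> \<noteq> 0" using nz that by blast
          then have "\<alpha> \<bullet> coroot \<alpha> = 2"
            by (simp add: coroot_def)
          then show ?thesis unfolding refl_def
            by (simp add: inner_diff_left algebra_simps)
        qed
        then have "bij (refl \<alpha>)" using step
          by (metis bij_betw_byWitness subset_UNIV surjI surj_def)
        then show ?case using step bij_comp by blast
      qed
      then show ?thesis using g(2) by (simp add: bij_is_surj surj_f_inv_f)
    qed
    define p where "p = - w0 v + b u + v"
    have "z = (b \<circ> w0 \<circ> inv b, b (w0 (- inv b v) + u) + v)"
      using g(1) unfolding aff_mult_def aff_inv_def by (simp add: comp_assoc)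
    also have "b \<circ> w0 \<circ> inv b = w0"
      by (rule ext) (simp add: bw bi)
    also have "b (w0 (- inv b v) + u) + v = p"
    proof -
      have "b (w0 (- inv b v) + u) = b (w0 (- inv b v)) + b u" using lb by (simp only: linear_add)
      also have "b (w0 (- inv b v)) = w0 (b (- inv b v))" by (rule bw)
      also have "b (- inv b v) = - v" using lb bi by (simp only: linear_neg)
      also have "w0 (- v) = - w0 v" using lw by (simp only: linear_neg)
      finally show ?thesis unfolding p_def by simp
    qed
    finally have "z = (w0, p)" .
    moreover have "w0 p = - p"
    proof -
      have "w0 p = - w0 (w0 v) + w0 (b u) + w0 v" unfolding p_def using lw
        by (simp only: linear_add linear_neg)
      also have "w0 (b u) = b (w0 u)" by (rule bw[symmetric])
      also have "b (w0 u) = - b u" using lb wu by (simp only: linear_neg)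
      finally show ?thesis unfolding p_def using ww by simp
    qed
    ultimately show ?thesis by blast
  qed
  have xin: "(w0, u) \<in> ?X"
  proof -
    have "aff_mult (aff_mult (aff_inv (id, 0)) (w0, u)) (id, 0) = (w0, u)"
      unfolding aff_mult_def aff_inv_def using lw by (simp add: linear_0)
    moreover have "(id, 0) \<in> affine_weyl_group \<Phi>"
      unfolding affine_weyl_group_def using zero_in_lattice weyl_group.id by blast
    ultimately show ?thesis unfolding aff_conj_class_def by force
  qed
  have nonb: "\<not> comm_adj aff_mult ?X (w0, u) z" for z
  proof
    assume a: "comm_adj aff_mult ?X (w0, u) z"
    then obtain p where p: "z = (w0, p)" "w0 p = - p" using conjform
      unfolding comm_adj_def by blast
    have "w0 u + p = w0 p + u" using a p(1) unfolding comm_adj_def aff_mult_def by simp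
    then have "- u + p = - p + u" using wu p(2) by simp
    then have "(2::real) *\<^sub>R p = 2 *\<^sub>R u" unfolding scaleR_2
      by (simp add: algebra_simps)
    then have "p = u" by simp
    then show False using a p(1) unfolding comm_adj_def by simp
  qed
  have "\<exists>\<alpha>\<in>\<Phi>. w0 (coroot \<alpha>) \<noteq> coroot \<alpha>"
  proof (rule ccontr)
    assume nn: "\<not> (\<exists>\<alpha>\<in>\<Phi>. w0 (coroot \<alpha>) \<noteq> coroot \<alpha>)"
    then have fix1: "w0 (coroot \<alpha>) = coroot \<alpha>" if "\<alpha> \<in> \<Phi>" for \<alpha> using that by blast
    have "w0 \<alpha> = \<alpha>" if "\<alpha> \<in> \<Phi>" for \<alpha>
    proof -
      have "\<alpha> \<noteq> 0" using nz that by blast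
      then have k: "2 / (\<alpha> \<bullet> \<alpha>) \<noteq> 0" by simp
      have "(2 / (\<alpha> \<bullet> \<alpha>)) *\<^sub>R w0 \<alpha> = (2 / (\<alpha> \<bullet> \<alpha>)) *\<^sub>R \<alpha>"
        using fix1[OF that] lw unfolding coroot_def by (simp add: linear_scale)
      then show ?thesis using k by simp
    qed
    then have "w0 y = id y" for y
      using linear_eq_on_span[OF lw linear_id, of \<Phi> y] sp by auto
    then show False using assms(3) by blast
  qed
  then obtain \<alpha> where al: "\<alpha> \<in> \<Phi>" "w0 (coroot \<alpha>) \<noteq> coroot \<alpha>" by blast
  let ?v = "coroot \<alpha>"
  have yin: "(w0, - w0 ?v + u + ?v) \<in> ?X"
  proof -
    have "aff_mult (aff_mult (aff_inv (id, ?v)) (w0, u)) (id, ?v) = (w0, - w0 ?v + u + ?v)"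
      unfolding aff_mult_def aff_inv_def using lw by (simp add: linear_neg)
    moreover have "(id, ?v) \<in> affine_weyl_group \<Phi>"
      unfolding affine_weyl_group_def using coroot_in_lattice[OF fin al(1)] weyl_group.id by blast
    ultimately show ?thesis unfolding aff_conj_class_def by force
  qed
  have ne: "(w0, u) \<noteq> (w0, - w0 ?v + u + ?v)"
    using al(2) by (auto simp: algebra_simps)
  have "(comm_adj aff_mult ?X)\<^sup>*\<^sup>* (w0, u) (w0, - w0 ?v + u + ?v)"
    using conn xin yin unfolding comm_graph_connected_def by blast
  then show False using ne nonb
    by (metis converse_rtranclpE)
qed

end
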